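(* Let $a,b,c,k,m>0$. The system $$\frac{dx}{dt}=bx(1-x-cy),\qquad \frac{dy}{dt}=y\Big(\frac{1}{1+kx}-y-ax-mxy\Big)$$ has no limit cycle (indeed no closed trajectory) lying in the open positive quadrant $\{(x,y):x>0,y>0\}$.
   Context: All parameters are positive constants. *)

theory Defs
  imports Complex_Main
begin

definition fx :: "real \<Rightarrow> real \<Rightarrow> real \<Rightarrow> real \<Rightarrow> real" where
  "fx b c x y = b * x * (1 - x - c * y)"

definition fy :: "real \<Rightarrow> real \<Rightarrow> real \<Rightarrow> real \<Rightarrow> real \<Rightarrow> real" where
  "fy a k m x y = y * (1 / (1 + k * x) - y - a * x - m * x * y)"

definition closed_trajectory ::
  "real \<Rightarrow> real \<Rightarrow> real \<Rightarrow> real \<Rightarrow> real \<Rightarrow> (real \<Rightarrow> real) \<Rightarrow> (real \<Rightarrow> real) \<Rightarrow> bool" where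
  "closed_trajectory a b c k m x y \<longleftrightarrow>
     (\<forall>t. (x has_real_derivative fx b c (x t) (y t)) (at t) \<and>
          (y has_real_derivative fy a k m (x t) (y t)) (at t)) \<and>
     (\<exists>T>0. \<forall>t. x (t + T) = x t \<and> y (t + T) = y t) \<and>
     (\<exists>s t. (x s, y s) \<noteq> (x t, y t))"

end

theory Submission
  imports Defs
begin

lemma negsq_deriv: "((\<lambda>z::real. (min z 0)^2) has_real_derivative 2 * min z 0) (at z)"
proof (cases "z < 0")
  case True
  have "((\<lambda>z::real. z^2) has_real_derivative 2 * min z 0) (at z)"
    using True by (auto intro!: derivative_eq_intros)
  then show ?thesis
    apply (rule has_field_derivative_transform_within_open[where S="{..<0}"])
    using True by auto
next
  case False
  show ?thesis
  proof (cases "z > 0")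
    case True
    have "((\<lambda>z::real. 0) has_real_derivative 2 * min z 0) (at z)"
      using True by (auto intro!: derivative_eq_intros)
    then show ?thesis
      apply (rule has_field_derivative_transform_within_open[where S="{0<..}"])
      using True by auto
  next
    case False
    with \<open>\<not> z < 0\<close> have z: "z = 0" by auto
    have "((\<lambda>w::real. (min w 0)^2 / w) \<longlongrightarrow> 0) (at 0)"
    proof (rule tendsto_sandwich[where f="\<lambda>w. - \<bar>w\<bar>" and h="\<lambda>w. \<bar>w\<bar>"])
      show "\<forall>\<^sub>F w in at 0. - \<bar>w\<bar> \<le> (min w 0)^2 / (w::real)"
        by (auto simp: min_def power2_eq_square)
      show "\<forall>\<^sub>F w in at 0. (min w 0)^2 / (w::real) \<le> \<bar>w\<bar>"
        by (auto simp: min_def power2_eq_square)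
      show "((\<lambda>w::real. - \<bar>w\<bar>) \<longlongrightarrow> 0) (at 0)"
        by (auto intro!: tendsto_eq_intros)
      show "((\<lambda>w::real. \<bar>w\<bar>) \<longlongrightarrow> 0) (at 0)"
        by (auto intro!: tendsto_eq_intros)
    qed
    then show ?thesis using z
      by (simp add: DERIV_def)
  qed
qed

lemma gronwall0:
  fixes E E' :: "real \<Rightarrow> real"
  assumes "t0 \<le> t1"
    and d: "\<And>t. t0 \<le> t \<Longrightarrow> t \<le> t1 \<Longrightarrow> (E has_real_derivative E' t) (at t)"
    and le: "\<And>t. t0 \<le> t \<Longrightarrow> t \<le> t1 \<Longrightarrow> E' t \<le> K * E t"
    and nn: "\<And>t. t0 \<le> t \<Longrightarrow> t \<le> t1 \<Longrightarrow> E t \<ge> 0"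
    and z: "E t0 = 0"
    and t: "t0 \<le> t" "t \<le> t1"
  shows "E t = 0"
proof -
  define F where "F s = E s * exp (- K * s)" for s
  have "F t \<le> F t0"
  proof (rule DERIV_nonpos_imp_nonincreasing[OF t(1)])
    fix s assume s: "t0 \<le> s" "s \<le> t"
    have "(F has_real_derivative E' s * exp (- K * s) + E s * (exp (- K * s) * (- K))) (at s)"
      unfolding F_def using s t
      by (auto intro!: derivative_eq_intros d)
    moreover have "E' s * exp (- K * s) + E s * (exp (- K * s) * (- K)) = (E' s - K * E s) * exp (- K * s)"
      by (simp add: algebra_simps)
    moreover have "(E' s - K * E s) * exp (- K * s) \<le> 0"
      using le[of s] s t by (simp add: mult_nonpos_nonneg)
    ultimately show "\<exists>y. DERIV F s :> y \<and> y \<le> 0" by metis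
  qed
  then have "E t * exp (- K * t) \<le> 0" using z by (simp add: F_def)
  then have "E t \<le> 0" by (simp add: mult_le_0_iff)
  then show ?thesis using nn[OF t] by simp
qed

lemma key_ineq:
  fixes p q al be K :: real
  assumes "\<bar>al\<bar> \<le> K" "0 \<le> be" "be \<le> K"
  shows "2 * min p 0 * (al * p + be * q) \<le> 2 * K * (min p 0)^2 + K * ((min p 0)^2 + (min q 0)^2)"
proof -
  define P where "P = min p 0"
  define Q where "Q = min q 0"
  have pp: "P * p = P^2" by (simp add: P_def min_def power2_eq_square)
  have pq: "P * q \<le> P * Q" by (simp add: P_def Q_def min_def mult_le_0_iff)
  have a1: "al * P^2 \<le> K * P^2"
    using assms(1) by (intro mult_right_mono) auto
  have sq: "2 * (P * Q) \<le> P^2 + Q^2"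
  proof -
    have "0 \<le> (P - Q)^2" by simp
    then show ?thesis by (simp add: power2_eq_square algebra_simps)
  qed
  have b1: "be * (2 * (P * q)) \<le> be * (2 * (P * Q))"
    by (rule mult_left_mono) (use pq assms(2) in auto)
  have b2: "be * (2 * (P * Q)) \<le> be * (P^2 + Q^2)"
    using sq assms(2) by (intro mult_left_mono) auto
  have b3: "be * (P^2 + Q^2) \<le> K * (P^2 + Q^2)"
    using assms(3) by (intro mult_right_mono) auto
  have "2 * P * (al * p + be * q) = 2 * (al * (P * p)) + be * (2 * (P * q))"
    by (simp add: algebra_simps)
  also have "\<dots> = 2 * (al * P^2) + be * (2 * (P * q))" using pp by simp
  also have "\<dots> \<le> 2 * K * P^2 + K * (P^2 + Q^2)" using a1 b1 b2 b3 by linarith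
  finally show ?thesis by (simp add: P_def Q_def)
qed

lemma cone_inv:
  fixes p q al be ga de :: "real \<Rightarrow> real"
  assumes "lo \<le> hi"
    and dp: "\<And>t. lo \<le> t \<Longrightarrow> t \<le> hi \<Longrightarrow> (p has_real_derivative al t * p t + be t * q t) (at t)"
    and dq: "\<And>t. lo \<le> t \<Longrightarrow> t \<le> hi \<Longrightarrow> (q has_real_derivative de t * q t + ga t * p t) (at t)"
    and bd: "\<And>t. lo \<le> t \<Longrightarrow> t \<le> hi \<Longrightarrow>
       \<bar>al t\<bar> \<le> K \<and> \<bar>de t\<bar> \<le> K \<and> 0 \<le> be t \<and> be t \<le> K \<and> 0 \<le> ga t \<and> ga t \<le> K"
    and p0: "p lo \<ge> 0" and q0: "q lo \<ge> 0"
    and t: "lo \<le> t" "t \<le> hi"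
  shows "p t \<ge> 0 \<and> q t \<ge> 0"
proof -
  define E where "E s = (min (p s) 0)^2 + (min (q s) 0)^2" for s
  define E' where "E' s = 2 * min (p s) 0 * (al s * p s + be s * q s)
       + 2 * min (q s) 0 * (de s * q s + ga s * p s)" for s
  have "E t = 0"
  proof (rule gronwall0[of lo hi E E' "4 * K"])
    fix s assume s: "lo \<le> s" "s \<le> hi"
    have h1: "((\<lambda>s. (min (p s) 0)^2) has_real_derivative 2 * min (p s) 0 * (al s * p s + be s * q s)) (at s)"
      using DERIV_chain2[OF negsq_deriv dp[OF s]] .
    have h2: "((\<lambda>s. (min (q s) 0)^2) has_real_derivative 2 * min (q s) 0 * (de s * q s + ga s * p s)) (at s)"
      using DERIV_chain2[OF negsq_deriv dq[OF s]] .
    show "(E has_real_derivative E' s) (at s)"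
      unfolding E_def E'_def by (rule DERIV_add[OF h1 h2])
    have k1: "2 * min (p s) 0 * (al s * p s + be s * q s) \<le> 2 * K * (min (p s) 0)^2 + K * ((min (p s) 0)^2 + (min (q s) 0)^2)"
      using bd[OF s] by (intro key_ineq) auto
    have k2: "2 * min (q s) 0 * (de s * q s + ga s * p s) \<le> 2 * K * (min (q s) 0)^2 + K * ((min (q s) 0)^2 + (min (p s) 0)^2)"
      using bd[OF s] by (intro key_ineq) auto
    show "E' s \<le> 4 * K * E s"
      unfolding E_def E'_def using k1 k2 by (simp add: algebra_simps)
    show "E s \<ge> 0" unfolding E_def by simp
  qed (use assms in \<open>auto simp: E_def min_def\<close>)
  then show ?thesis unfolding E_def
    by (smt (verit) zero_le_power2 power2_eq_square mult_eq_0_iff)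
qed

lemma const_nondec:
  fixes f f' :: "real \<Rightarrow> real"
  assumes "a \<le> b" "f a = f b"
    and d: "\<And>t. a \<le> t \<Longrightarrow> t \<le> b \<Longrightarrow> (f has_real_derivative f' t) (at t)"
    and nn: "\<And>t. a \<le> t \<Longrightarrow> t \<le> b \<Longrightarrow> f' t \<ge> 0"
    and t: "a \<le> t" "t \<le> b"
  shows "f t = f a"
proof -
  have "f a \<le> f t"
  proof (rule DERIV_nonneg_imp_nondecreasing[OF t(1)])
    fix x assume "a \<le> x" "x \<le> t"
    then show "\<exists>y. DERIV f x :> y \<and> y \<ge> 0" using d[of x] nn[of x] t by auto
  qed
  moreover have "f t \<le> f b"
  proof (rule DERIV_nonneg_imp_nondecreasing[OF t(2)])
    fix x assume "t \<le> x" "x \<le> b"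
    then show "\<exists>y. DERIV f x :> y \<and> y \<ge> 0" using d[of x] nn[of x] t by auto
  qed
  ultimately show ?thesis using assms(2) by simp
qed

lemma const_noninc:
  fixes f f' :: "real \<Rightarrow> real"
  assumes "a \<le> b" "f a = f b"
    and d: "\<And>t. a \<le> t \<Longrightarrow> t \<le> b \<Longrightarrow> (f has_real_derivative f' t) (at t)"
    and nn: "\<And>t. a \<le> t \<Longrightarrow> t \<le> b \<Longrightarrow> f' t \<le> 0"
    and t: "a \<le> t" "t \<le> b"
  shows "f t = f a"
proof -
  have "(\<lambda>s. - f s) t = (\<lambda>s. - f s) a"
  proof (rule const_nondec[where f'="\<lambda>s. - f' s", OF assms(1) _ _ _ t])
    show "- f a = - f b" using assms(2) by simp
    fix s assume "a \<le> s" "s \<le> b"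
    then show "((\<lambda>s. - f s) has_real_derivative - f' s) (at s)" "0 \<le> - f' s"
      using d[of s] nn[of s] by (auto intro: DERIV_minus)
  qed
  then show ?thesis by simp
qed

lemma per_nat:
  fixes f :: "real \<Rightarrow> real"
  assumes "\<And>t. f (t + T) = f t"
  shows "f (t + real n * T) = f t"
proof (induction n)
  case 0 then show ?case by simp
next
  case (Suc n)
  have "f (t + real (Suc n) * T) = f ((t + real n * T) + T)" by (simp add: algebra_simps)
  also have "\<dots> = f t" using assms Suc by simp
  finally show ?case .
qed

lemma per_int:
  fixes f :: "real \<Rightarrow> real"
  assumes "\<And>t. f (t + T) = f t"
  shows "f (t + real_of_int n * T) = f t"
proof (cases "n \<ge> 0")
  case True
  then have e: "real_of_int n = real (nat n)" by simp
  show ?thesis unfolding e by (rule per_nat[of f T, OF assms])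
next
  case False
  then have e: "real_of_int n = - real (nat (- n))" by simp
  have "f ((t - real (nat (- n)) * T) + real (nat (- n)) * T) = f (t - real (nat (- n)) * T)"
    by (rule per_nat[of f T, OF assms])
  then show ?thesis unfolding e by (simp add: algebra_simps)
qed

lemma per_const:
  fixes f :: "real \<Rightarrow> real"
  assumes per: "\<And>t. f (t + T) = f t" and T: "T > 0"
    and c: "\<And>t. a \<le> t \<Longrightarrow> t \<le> a + T \<Longrightarrow> f t = f a"
  shows "f s = f a"
proof -
  define n where "n = floor ((s - a) / T)"
  define r where "r = s - real_of_int n * T"
  have "real_of_int n \<le> (s - a) / T" "(s - a) / T < real_of_int n + 1"
    unfolding n_def by linarith+
  then have "real_of_int n * T \<le> s - a" "s - a < (real_of_int n + 1) * T"
    using T by (simp_all add: field_simps)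
  then have r: "a \<le> r" "r \<le> a + T" unfolding r_def by (simp_all add: algebra_simps)
  have "f s = f (r + real_of_int n * T)" by (simp add: r_def)
  also have "\<dots> = f r" by (rule per_int[of f T, OF per])
  also have "\<dots> = f a" using c[OF r] .
  finally show ?thesis .
qed

lemma deriv_u:
  assumes dx: "(x has_real_derivative x') (at t)" and dy: "(y has_real_derivative y') (at t)"
  shows "((\<lambda>t. fx b c (x t) (y t)) has_real_derivative
     (b - 2*b*x t - b*c*y t) * x' - (b*c*x t) * y') (at t)"
  unfolding fx_def
  by (rule derivative_eq_intros dx dy refl)+ (simp add: algebra_simps)

lemma deriv_v:
  assumes dx: "(x has_real_derivative x') (at t)" and dy: "(y has_real_derivative y') (at t)"
    and pos: "1 + k * x t \<noteq> 0"
  shows "((\<lambda>t. fy a k m (x t) (y t)) has_real_derivative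
     - (k*y t/(1+k*x t)^2 + a*y t + m*(y t)^2) * x' + (1/(1+k*x t) - 2*y t - a*x t - 2*m*x t*y t) * y') (at t)"
  unfolding fy_def
  apply (rule derivative_eq_intros dx dy refl pos)+
  using pos by (simp add: field_simps power2_eq_square)

theorem theorem6:
  fixes a b c k m :: real
  assumes "a > 0" "b > 0" "c > 0" "k > 0" "m > 0"
  shows "\<not> (\<exists>x y. closed_trajectory a b c k m x y \<and> (\<forall>t. x t > 0 \<and> y t > 0))"
proof
  assume "\<exists>x y. closed_trajectory a b c k m x y \<and> (\<forall>t. x t > 0 \<and> y t > 0)"
  then obtain x y where ct: "closed_trajectory a b c k m x y" and pos: "\<And>t. x t > 0 \<and> y t > 0"
    by blast
  define u where "u t = fx b c (x t) (y t)" for t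
  define v where "v t = fy a k m (x t) (y t)" for t
  have dx: "\<And>t. (x has_real_derivative u t) (at t)" and dy: "\<And>t. (y has_real_derivative v t) (at t)"
    using ct unfolding closed_trajectory_def u_def v_def by auto
  obtain T where T: "T > 0" and per: "\<And>t. x (t + T) = x t \<and> y (t + T) = y t"
    using ct unfolding closed_trajectory_def by blast
  have perx: "\<And>t. x (t + T) = x t" and pery: "\<And>t. y (t + T) = y t" using per by auto
  obtain s0 s1 where ne: "(x s0, y s0) \<noteq> (x s1, y s1)"
    using ct unfolding closed_trajectory_def by blast
  have cx: "\<And>t. isCont x t" using dx by (rule DERIV_isCont)
  have cy: "\<And>t. isCont y t" using dy by (rule DERIV_isCont)
  have den: "\<And>t. 1 + k * x t \<noteq> 0" using pos assms by (smt (verit) mult_pos_pos)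
  define al where "al t = b - 2*b*x t - b*c*y t" for t
  define be where "be t = b*c*x t" for t
  define ga where "ga t = k*y t/(1+k*x t)^2 + a*y t + m*(y t)^2" for t
  define de where "de t = 1/(1+k*x t) - 2*y t - a*x t - 2*m*x t*y t" for t
  have du: "(u has_real_derivative al t * u t - be t * v t) (at t)" for t
  proof -
    have "((\<lambda>t. fx b c (x t) (y t)) has_real_derivative
      (b - 2*b*x t - b*c*y t) * u t - (b*c*x t) * v t) (at t)"
      by (rule deriv_u[OF dx dy])
    moreover have "(\<lambda>t. fx b c (x t) (y t)) = u" by (simp add: u_def fun_eq_iff)
    ultimately show ?thesis by (simp add: al_def be_def)
  qed
  have dv: "(v has_real_derivative - ga t * u t + de t * v t) (at t)" for t
  proof -
    have "((\<lambda>t. fy a k m (x t) (y t)) has_real_derivative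
      - (k*y t/(1+k*x t)^2 + a*y t + m*(y t)^2) * u t + (1/(1+k*x t) - 2*y t - a*x t - 2*m*x t*y t) * v t) (at t)"
      by (rule deriv_v[OF dx dy den])
    moreover have "(\<lambda>t. fy a k m (x t) (y t)) = v" by (simp add: v_def fun_eq_iff)
    ultimately show ?thesis by (simp add: ga_def de_def)
  qed
  have bepos: "be t \<ge> 0" for t using pos[of t] assms unfolding be_def by simp
  have gapos: "ga t \<ge> 0" for t using pos[of t] assms unfolding ga_def by simp
  obtain xi where xi: "0 < xi" "xi < T" "DERIV x xi :> 0"
  proof -
    have "\<exists>z. 0 < z \<and> z < T \<and> DERIV x z :> 0"
    proof (rule Rolle[OF T])
      show "x 0 = x T" using perx[of 0] by simp
      show "continuous_on {0..T} x" using cx by (simp add: continuous_at_imp_continuous_on)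
      fix z show "x differentiable (at z)" using dx real_differentiable_def by blast
    qed
    then show ?thesis using that by blast
  qed
  have u0: "u xi = 0" using DERIV_unique[OF dx[of xi] xi(3)] .
  define S where "S t = \<bar>al t\<bar> + \<bar>de t\<bar> + \<bar>be t\<bar> + \<bar>ga t\<bar>" for t
  have cS: "isCont S t" for t
    unfolding S_def al_def de_def be_def ga_def
    using den[of t] by (auto intro!: continuous_intros cx cy)
  obtain K where K: "\<And>t. xi \<le> t \<Longrightarrow> t \<le> xi + T \<Longrightarrow> S t \<le> K"
    using isCont_eq_Ub[of xi "xi + T" S] cS T by auto
  have bd: "\<And>t. xi \<le> t \<Longrightarrow> t \<le> xi + T \<Longrightarrow>
       \<bar>al t\<bar> \<le> K \<and> \<bar>de t\<bar> \<le> K \<and> 0 \<le> be t \<and> be t \<le> K \<and> 0 \<le> ga t \<and> ga t \<le> K"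
  proof -
    fix t assume "xi \<le> t" "t \<le> xi + T"
    then have "S t \<le> K" by (rule K)
    then show "\<bar>al t\<bar> \<le> K \<and> \<bar>de t\<bar> \<le> K \<and> 0 \<le> be t \<and> be t \<le> K \<and> 0 \<le> ga t \<and> ga t \<le> K"
      using bepos[of t] gapos[of t] unfolding S_def by auto
  qed
  have sgn: "(\<forall>t. xi \<le> t \<and> t \<le> xi + T \<longrightarrow> u t \<ge> 0 \<and> v t \<le> 0) \<or>
             (\<forall>t. xi \<le> t \<and> t \<le> xi + T \<longrightarrow> u t \<le> 0 \<and> v t \<ge> 0)"
  proof (cases "v xi \<le> 0")
    case True
    have "u t \<ge> 0 \<and> - v t \<ge> 0" if "xi \<le> t" "t \<le> xi + T" for t
    proof (rule cone_inv[where p=u and q="\<lambda>t. - v t" and al=al and be=be and ga=ga and de=de and K=K and lo=xi and hi="xi+T"])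
      fix s
      show "(u has_real_derivative al s * u s + be s * - v s) (at s)" using du[of s] by simp
      show "((\<lambda>t. - v t) has_real_derivative de s * - v s + ga s * u s) (at s)"
        using DERIV_minus[OF dv[of s]] by (simp add: algebra_simps)
    qed (use bd True u0 T that in auto)
    then show ?thesis by auto
  next
    case False
    have "- u t \<ge> 0 \<and> v t \<ge> 0" if "xi \<le> t" "t \<le> xi + T" for t
    proof (rule cone_inv[where p="\<lambda>t. - u t" and q=v and al=al and be=be and ga=ga and de=de and K=K and lo=xi and hi="xi+T"])
      fix s
      show "((\<lambda>t. - u t) has_real_derivative al s * - u s + be s * v s) (at s)"
        using DERIV_minus[OF du[of s]] by (simp add: algebra_simps)
      show "(v has_real_derivative de s * v s + ga s * - u s) (at s)"
        using dv[of s] by (simp add: algebra_simps)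
    qed (use bd False u0 T that in auto)
    then show ?thesis by auto
  qed
  have xc: "x t = x xi" if "xi \<le> t" "t \<le> xi + T" for t
    using sgn
  proof
    assume h: "\<forall>t. xi \<le> t \<and> t \<le> xi + T \<longrightarrow> u t \<ge> 0 \<and> v t \<le> 0"
    show ?thesis
      by (rule const_nondec[where f'=u, OF _ _ _ _ that]) (use h T perx[of xi] dx in auto)
  next
    assume h: "\<forall>t. xi \<le> t \<and> t \<le> xi + T \<longrightarrow> u t \<le> 0 \<and> v t \<ge> 0"
    show ?thesis
      by (rule const_noninc[where f'=u, OF _ _ _ _ that]) (use h T perx[of xi] dx in auto)
  qed
  have yc: "y t = y xi" if "xi \<le> t" "t \<le> xi + T" for t
    using sgn
  proof
    assume h: "\<forall>t. xi \<le> t \<and> t \<le> xi + T \<longrightarrow> u t \<ge> 0 \<and> v t \<le> 0"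
    show ?thesis
      by (rule const_noninc[where f'=v, OF _ _ _ _ that]) (use h T pery[of xi] dy in auto)
  next
    assume h: "\<forall>t. xi \<le> t \<and> t \<le> xi + T \<longrightarrow> u t \<le> 0 \<and> v t \<ge> 0"
    show ?thesis
      by (rule const_nondec[where f'=v, OF _ _ _ _ that]) (use h T pery[of xi] dy in auto)
  qed
  have "x s = x xi" for s by (rule per_const[OF perx T xc])
  moreover have "y s = y xi" for s by (rule per_const[OF pery T yc])
  ultimately show False using ne by metis
qed

end
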